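(* Assume (A1)–(A4) below. For any $\omega\in\Delta^{L-1}$, $$\beta^*(\omega)=\sum_{t\in\mathcal T}\psi_t(\omega)\,\mathrm{LATE}_t,\qquad \psi_t(\omega)\ge0,\quad\sum_{t\in\mathcal T}\psi_t(\omega)=1,$$ where $\psi_t(\omega)=\sum_{\ell}\omega_\ell\alpha_t(\ell)$.
   Context: Observe i.i.d. $(Y_i,D_i,\mathbf Z_i)$, $D_i\in\{0,1\}$, $\mathbf Z_i=(Z_{1i},\dots,Z_{Li})'\in\{0,1\}^L$, $L\ge2$. Units have potential outcomes $Y_i(0),Y_i(1)$ and compliance type $D_i(\cdot):\{0,1\}^L\to\{0,1\}$, $D_i=D_i(\mathbf Z_i)$, $Y_i=D_iY_i(1)+(1-D_i)Y_i(0)$; $\mathcal T$ is the set of types, $\theta_t=P(D_i(\cdot)=t)$, $\mathrm{LATE}_t=\mathbb E[Y_i(1)-Y_i(0)\mid D_i(\cdot)=t]$, and $t(z_\ell,z_{-\ell})$ is type $t$'s treatment at the instrument vector with $\ell$-th coordinate $z_\ell$, others $z_{-\ell}$. $p_\ell=P(Z_{\ell i}=1)$, $\pi_\ell,\rho_\ell$ the differences of $\mathbb E[D_i\mid Z_{\ell i}=z]$, $\mathbb E[Y_i\mid Z_{\ell i}=z]$ between $z=1,0$, $\mathrm{Wald}_\ell=\rho_\ell/\pi_\ell$, $\Sigma_Z=\mathrm{Var}(\mathbf Z_i)$. $q_\ell(z_{-\ell})=P(Z_{-\ell}=z_{-\ell}\mid Z_\ell=1)$, $q^0_\ell(z_{-\ell})=P(Z_{-\ell}=z_{-\ell}\mid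 Z_\ell=0)$, $\varphi_t(\ell)=\sum_{z_{-\ell}}[t(1,z_{-\ell})q_\ell(z_{-\ell})-t(0,z_{-\ell})q^0_\ell(z_{-\ell})]$, $\alpha_t(\ell)=\theta_t\varphi_t(\ell)/\pi_\ell$. $\Delta^{L-1}$ is the probability simplex in $\mathbb R^L$ and $\beta^*(\omega)=\sum_\ell\omega_\ell\mathrm{Wald}_\ell$ (the estimand of the representative targeting estimator $\sum_\ell\omega_\ell\widehat{\mathrm{Wald}}_\ell$). Assumptions: (A1) $(Y_i(0),Y_i(1),D_i(\cdot))$ independent of $\mathbf Z_i$. (A2) $D_i(z)$ nondecreasing in each coordinate for every $i$. (A3) $p_\ell>0$, $\pi_\ell>0$ for all $\ell$; $\Sigma_Z$ positive definite. (A4) For each $\ell$, $\mathbb E[f(Z_{-\ell})\mid Z_\ell=1]\ge\mathbb E[f(Z_{-\ell})\mid Z_\ell=0]$ for every nondecreasing $f:\{0,1\}^{L-1}\to\mathbb R$. *)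

theory Defs
  imports "HOL-Probability.Probability"
begin

text \<open>Instrument vectors in {0,1}^L are encoded as functions nat => bool that are
  False at every coordinate >= L.  A compliance type is a function from instrument
  vectors to {0,1} (bool); by convention it is False outside {0,1}^L.\<close>

definition Zsp :: "nat \<Rightarrow> (nat \<Rightarrow> bool) set" where
  "Zsp L = {z. \<forall>l. L \<le> l \<longrightarrow> \<not> z l}"

definition canon_types :: "nat \<Rightarrow> ((nat \<Rightarrow> bool) \<Rightarrow> bool) set" where
  "canon_types L = {t. \<forall>z. z \<notin> Zsp L \<longrightarrow> \<not> t z}"

definition Types :: "nat \<Rightarrow> ((nat \<Rightarrow> bool) \<Rightarrow> bool) set" where
  "Types L = {t \<in> canon_types L. mono_on (Zsp L) t}"

definition cexp :: "'a measure \<Rightarrow> ('a \<Rightarrow> real) \<Rightarrow> 'a set \<Rightarrow> real" where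
  "cexp M f A = (\<integral>x. f x * indicator A x \<partial>M) / measure M A"

definition condprob :: "'a measure \<Rightarrow> 'a set \<Rightarrow> 'a set \<Rightarrow> real" where
  "condprob M B A = measure M (B \<inter> A) / measure M A"

definition evZ :: "'a measure \<Rightarrow> ('a \<Rightarrow> nat \<Rightarrow> bool) \<Rightarrow> nat \<Rightarrow> bool \<Rightarrow> 'a set" where
  "evZ M Z l b = {x \<in> space M. Z x l = b}"

definition Dobs :: "('a \<Rightarrow> (nat \<Rightarrow> bool) \<Rightarrow> bool) \<Rightarrow> ('a \<Rightarrow> nat \<Rightarrow> bool) \<Rightarrow> 'a \<Rightarrow> real" where
  "Dobs D Z x = (if D x (Z x) then 1 else 0)"

definition Yobs :: "('a \<Rightarrow> real) \<Rightarrow> ('a \<Rightarrow> real) \<Rightarrow> ('a \<Rightarrow> (nat \<Rightarrow> bool) \<Rightarrow> bool)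
     \<Rightarrow> ('a \<Rightarrow> nat \<Rightarrow> bool) \<Rightarrow> 'a \<Rightarrow> real" where
  "Yobs Y0 Y1 D Z x = (if D x (Z x) then Y1 x else Y0 x)"

definition pZ :: "'a measure \<Rightarrow> ('a \<Rightarrow> nat \<Rightarrow> bool) \<Rightarrow> nat \<Rightarrow> real" where
  "pZ M Z l = measure M (evZ M Z l True)"

definition piZ :: "'a measure \<Rightarrow> ('a \<Rightarrow> (nat \<Rightarrow> bool) \<Rightarrow> bool) \<Rightarrow> ('a \<Rightarrow> nat \<Rightarrow> bool) \<Rightarrow> nat \<Rightarrow> real" where
  "piZ M D Z l = cexp M (Dobs D Z) (evZ M Z l True) - cexp M (Dobs D Z) (evZ M Z l False)"

definition rhoZ :: "'a measure \<Rightarrow> ('a \<Rightarrow> real) \<Rightarrow> ('a \<Rightarrow> real) \<Rightarrow> ('a \<Rightarrow> (nat \<Rightarrow> bool) \<Rightarrow> bool)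
     \<Rightarrow> ('a \<Rightarrow> nat \<Rightarrow> bool) \<Rightarrow> nat \<Rightarrow> real" where
  "rhoZ M Y0 Y1 D Z l = cexp M (Yobs Y0 Y1 D Z) (evZ M Z l True) - cexp M (Yobs Y0 Y1 D Z) (evZ M Z l False)"

definition Wald :: "'a measure \<Rightarrow> ('a \<Rightarrow> real) \<Rightarrow> ('a \<Rightarrow> real) \<Rightarrow> ('a \<Rightarrow> (nat \<Rightarrow> bool) \<Rightarrow> bool)
     \<Rightarrow> ('a \<Rightarrow> nat \<Rightarrow> bool) \<Rightarrow> nat \<Rightarrow> real" where
  "Wald M Y0 Y1 D Z l = rhoZ M Y0 Y1 D Z l / piZ M D Z l"

definition SigmaZ :: "'a measure \<Rightarrow> ('a \<Rightarrow> nat \<Rightarrow> bool) \<Rightarrow> nat \<Rightarrow> nat \<Rightarrow> real" where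
  "SigmaZ M Z l m = measure M {x \<in> space M. Z x l \<and> Z x m} - pZ M Z l * pZ M Z m"

definition posdef :: "nat \<Rightarrow> (nat \<Rightarrow> nat \<Rightarrow> real) \<Rightarrow> bool" where
  "posdef L S \<longleftrightarrow> (\<forall>c::nat \<Rightarrow> real. (\<exists>l<L. c l \<noteq> 0) \<longrightarrow> (\<Sum>l<L. \<Sum>m<L. c l * c m * S l m) > 0)"

text \<open>(A4): nondecreasing functions f of Z_{-l} are represented as functions on {0,1}^L,
  nondecreasing there, evaluated at Z with the l-th coordinate set to 0.\<close>
definition A4 :: "'a measure \<Rightarrow> ('a \<Rightarrow> nat \<Rightarrow> bool) \<Rightarrow> nat \<Rightarrow> bool" where
  "A4 M Z L \<longleftrightarrow> (\<forall>l<L. \<forall>f :: (nat \<Rightarrow> bool) \<Rightarrow> real. mono_on (Zsp L) f \<longrightarrow>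
      cexp M (\<lambda>x. f ((Z x)(l := False))) (evZ M Z l True)
        \<ge> cexp M (\<lambda>x. f ((Z x)(l := False))) (evZ M Z l False))"

text \<open>q_l(z_{-l}) and q^0_l(z_{-l}); z_{-l} is encoded as a vector of Zsp L with z l = False.\<close>
definition qZ :: "'a measure \<Rightarrow> ('a \<Rightarrow> nat \<Rightarrow> bool) \<Rightarrow> nat \<Rightarrow> bool \<Rightarrow> (nat \<Rightarrow> bool) \<Rightarrow> real" where
  "qZ M Z l b z = condprob M {x \<in> space M. (Z x)(l := False) = z} (evZ M Z l b)"

definition phi :: "'a measure \<Rightarrow> ('a \<Rightarrow> nat \<Rightarrow> bool) \<Rightarrow> nat \<Rightarrow> ((nat \<Rightarrow> bool) \<Rightarrow> bool) \<Rightarrow> nat \<Rightarrow> real" where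
  "phi M Z L t l = (\<Sum>z \<in> {z \<in> Zsp L. \<not> z l}.
      (if t (z(l := True)) then 1 else 0) * qZ M Z l True z - (if t z then 1 else 0) * qZ M Z l False z)"

definition theta :: "'a measure \<Rightarrow> ('a \<Rightarrow> (nat \<Rightarrow> bool) \<Rightarrow> bool) \<Rightarrow> ((nat \<Rightarrow> bool) \<Rightarrow> bool) \<Rightarrow> real" where
  "theta M D t = measure M {x \<in> space M. D x = t}"

definition alpha :: "'a measure \<Rightarrow> ('a \<Rightarrow> (nat \<Rightarrow> bool) \<Rightarrow> bool) \<Rightarrow> ('a \<Rightarrow> nat \<Rightarrow> bool) \<Rightarrow> nat
     \<Rightarrow> ((nat \<Rightarrow> bool) \<Rightarrow> bool) \<Rightarrow> nat \<Rightarrow> real" where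
  "alpha M D Z L t l = theta M D t * phi M Z L t l / piZ M D Z l"

definition psi :: "'a measure \<Rightarrow> ('a \<Rightarrow> (nat \<Rightarrow> bool) \<Rightarrow> bool) \<Rightarrow> ('a \<Rightarrow> nat \<Rightarrow> bool) \<Rightarrow> nat
     \<Rightarrow> (nat \<Rightarrow> real) \<Rightarrow> ((nat \<Rightarrow> bool) \<Rightarrow> bool) \<Rightarrow> real" where
  "psi M D Z L w t = (\<Sum>l<L. w l * alpha M D Z L t l)"

definition LATE :: "'a measure \<Rightarrow> ('a \<Rightarrow> real) \<Rightarrow> ('a \<Rightarrow> real) \<Rightarrow> ('a \<Rightarrow> (nat \<Rightarrow> bool) \<Rightarrow> bool)
     \<Rightarrow> ((nat \<Rightarrow> bool) \<Rightarrow> bool) \<Rightarrow> real" where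
  "LATE M Y0 Y1 D t = cexp M (\<lambda>x. Y1 x - Y0 x) {x \<in> space M. D x = t}"

definition beta_star :: "'a measure \<Rightarrow> ('a \<Rightarrow> real) \<Rightarrow> ('a \<Rightarrow> real) \<Rightarrow> ('a \<Rightarrow> (nat \<Rightarrow> bool) \<Rightarrow> bool)
     \<Rightarrow> ('a \<Rightarrow> nat \<Rightarrow> bool) \<Rightarrow> nat \<Rightarrow> (nat \<Rightarrow> real) \<Rightarrow> real" where
  "beta_star M Y0 Y1 D Z L w = (\<Sum>l<L. w l * Wald M Y0 Y1 D Z l)"

definition wsimplex :: "nat \<Rightarrow> (nat \<Rightarrow> real) \<Rightarrow> bool" where
  "wsimplex L w \<longleftrightarrow> (\<forall>l<L. 0 \<le> w l) \<and> (\<Sum>l<L. w l) = 1"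

end

theory Submission
  imports Defs
begin

lemma indep_int:
  fixes V :: "'a \<Rightarrow> real \<times> real \<times> ((nat \<Rightarrow> bool) \<Rightarrow> bool)"
    and Z :: "'a \<Rightarrow> nat \<Rightarrow> bool"
  assumes P: "prob_space M"
    and A1: "prob_space.indep_set M
               {V -` A \<inter> space M | A. A \<in> sets (borel \<Otimes>\<^sub>M borel \<Otimes>\<^sub>M count_space UNIV)}
               {Z -` B \<inter> space M | B. B \<in> sets (count_space UNIV)}"
    and V: "V \<in> measurable M (borel \<Otimes>\<^sub>M borel \<Otimes>\<^sub>M count_space UNIV)"
    and Zm: "Z \<in> measurable M (count_space UNIV)"
    and H: "H \<in> borel_measurable (borel \<Otimes>\<^sub>M borel \<Otimes>\<^sub>M count_space UNIV)"
    and int: "integrable M (\<lambda>x. H (V x))"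
  shows "(\<integral>x. H (V x) * indicator {x \<in> space M. Z x \<in> S} x \<partial>M)
        = (\<integral>x. H (V x) \<partial>M) * measure M {x \<in> space M. Z x \<in> S}"
proof -
  interpret prob_space M by fact
  let ?E = "{x \<in> space M. Z x \<in> S}"
  have Ev: "?E \<in> sets M"
  proof -
    have "Z -` S \<inter> space M \<in> sets M" by (rule measurable_sets[OF Zm]) simp
    moreover have "?E = Z -` S \<inter> space M" by auto
    ultimately show ?thesis by simp
  qed
  have X: "(\<lambda>x. H (V x)) \<in> borel_measurable M" using H V by measurable
  have Y: "(indicator ?E :: 'a \<Rightarrow> real) \<in> borel_measurable M" using Ev by simp
  have iv: "indep_var borel (\<lambda>x. H (V x)) borel (indicator ?E :: 'a \<Rightarrow> real)"
    unfolding indep_var_def indep_vars_def2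
  proof (intro conjI ballI)
    fix i show "case_bool (\<lambda>x. H (V x)) (indicator ?E :: 'a \<Rightarrow> real) i \<in> measurable M (case_bool borel borel i)"
      using X Y by (cases i) auto
  next
    show "indep_sets (\<lambda>i. {case_bool (\<lambda>x. H (V x)) (indicator ?E :: 'a \<Rightarrow> real) i -` A \<inter> space M |A.
          A \<in> sets (case_bool borel borel i)}) UNIV"
      using A1[unfolded indep_set_def]
    proof (rule indep_sets_mono_sets)
      fix i :: bool
      show "{case_bool (\<lambda>x. H (V x)) (indicator ?E :: 'a \<Rightarrow> real) i -` A \<inter> space M |A.
          A \<in> sets (case_bool borel borel i)} \<subseteq> case_bool {V -` A \<inter> space M | A. A \<in> sets (borel \<Otimes>\<^sub>M borel \<Otimes>\<^sub>M count_space UNIV)}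
               {Z -` B \<inter> space M | B. B \<in> sets (count_space UNIV)} i"
      proof (cases i)
        case True
        show ?thesis
        proof (clarsimp simp: True)
          fix A :: "real set" assume "A \<in> sets borel"
          then have "H -` A \<inter> space (borel \<Otimes>\<^sub>M borel \<Otimes>\<^sub>M count_space UNIV) \<in> sets (borel \<Otimes>\<^sub>M borel \<Otimes>\<^sub>M count_space UNIV)"
            using H by (rule measurable_sets[rotated])
          moreover have "(\<lambda>x. H (V x)) -` A \<inter> space M = V -` (H -` A \<inter> space (borel \<Otimes>\<^sub>M borel \<Otimes>\<^sub>M count_space UNIV)) \<inter> space M"
            by (auto simp: space_pair_measure)
          ultimately show "\<exists>B. (\<lambda>x. H (V x)) -` A \<inter> space M = V -` B \<inter> space M \<and> B \<in> sets (borel \<Otimes>\<^sub>M borel \<Otimes>\<^sub>M count_space UNIV)"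
            by blast
        qed
      next
        case False
        show ?thesis
        proof (clarsimp simp: False)
          fix A :: "real set"
          have "(indicator ?E :: 'a \<Rightarrow> real) -` A \<inter> space M = Z -` {z. (indicator S z :: real) \<in> A} \<inter> space M"
            by (auto simp: indicator_def)
          then show "\<exists>B. (indicator ?E :: 'a \<Rightarrow> real) -` A \<inter> space M = Z -` B \<inter> space M"
            by blast
        qed
      qed
    qed
  qed
  have "(\<integral>x. H (V x) * indicator ?E x \<partial>M) = (\<integral>x. H (V x) \<partial>M) * (\<integral>x. indicator ?E x \<partial>M)"
    by (rule indep_var_lebesgue_integral[OF iv int]) (use Ev in \<open>auto simp: integrable_indicator_iff Int_absorb2 sets.sets_into_space less_top[symmetric]\<close>)
  also have "(\<integral>x. indicator ?E x \<partial>M) = measure M ?E" using Ev by simp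
  finally show ?thesis .
qed

lemma Zsp_finite: "finite (Zsp L)"
proof -
  have "Zsp L \<subseteq> (\<lambda>S l. l \<in> S) ` Pow {..<L}"
  proof
    fix z assume z: "z \<in> Zsp L"
    have "z = (\<lambda>l. l \<in> {l. z l})" by auto
    moreover have "{l. z l} \<subseteq> {..<L}" using z by (auto simp: Zsp_def not_less[symmetric])
    ultimately show "z \<in> (\<lambda>S l. l \<in> S) ` Pow {..<L}" by blast
  qed
  then show ?thesis by (rule finite_subset) auto
qed

lemma Types_finite: "finite (Types L)"
proof -
  have "Types L \<subseteq> (\<lambda>S z. z \<in> S) ` Pow (Zsp L)"
  proof
    fix t assume t: "t \<in> Types L"
    have "t = (\<lambda>z. z \<in> {z. t z})" by auto
    moreover have "{z. t z} \<subseteq> Zsp L" using t by (auto simp: Types_def canon_types_def)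
    ultimately show "t \<in> (\<lambda>S z. z \<in> S) ` Pow (Zsp L)" by blast
  qed
  then show ?thesis by (rule finite_subset) (auto intro: Zsp_finite)
qed

lemma Zev:
  assumes Zm: "Z \<in> measurable M (count_space UNIV)"
  shows "{x \<in> space M. Q (Z x)} \<in> sets M"
proof -
  have "Z -` {z. Q z} \<inter> space M \<in> sets M" by (rule measurable_sets[OF Zm]) simp
  moreover have "{x \<in> space M. Q (Z x)} = Z -` {z. Q z} \<inter> space M" by auto
  ultimately show ?thesis by simp
qed

lemma Zfun_meas:
  assumes Zm: "Z \<in> measurable M (count_space UNIV)"
  shows "(\<lambda>x. f (Z x) :: real) \<in> borel_measurable M"
  using measurable_compose[OF Zm, of f borel] by (simp add: comp_def)

lemma int_ind:
  assumes "prob_space M" "A \<in> sets M"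
  shows "integrable M (indicator A :: _ \<Rightarrow> real)"
proof -
  interpret prob_space M by fact
  show ?thesis using assms(2)
    by (auto simp: integrable_indicator_iff Int_absorb2 sets.sets_into_space less_top[symmetric])
qed

lemma qsum:
  assumes P: "prob_space M" and Zm: "Z \<in> measurable M (count_space UNIV)"
    and ZL: "\<forall>x \<in> space M. Z x \<in> Zsp L"
  shows "(\<Sum>z \<in> {z \<in> Zsp L. \<not> z l}. g z * qZ M Z l b z)
       = cexp M (\<lambda>x. g ((Z x)(l := False))) (evZ M Z l b)"
proof -
  interpret prob_space M by fact
  define E where "E = evZ M Z l b"
  define Zs where "Zs = {z \<in> Zsp L. \<not> z l}"
  have fin: "finite Zs" unfolding Zs_def using Zsp_finite by simp
  define A where "A z = {x \<in> space M. (Z x)(l := False) = z \<and> Z x l = b}" for z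
  have Aev: "A z \<in> sets M" for z unfolding A_def by (rule Zev[OF Zm])
  have AE: "{x \<in> space M. (Z x)(l := False) = z} \<inter> evZ M Z l b = A z" for z
    by (auto simp: A_def E_def evZ_def)
  have "(\<Sum>z \<in> Zs. g z * qZ M Z l b z) = (\<Sum>z \<in> Zs. g z * measure M (A z)) / measure M E"
    by (simp add: qZ_def condprob_def AE sum_divide_distrib E_def)
  also have "(\<Sum>z \<in> Zs. g z * measure M (A z)) = (\<Sum>z \<in> Zs. \<integral>x. g z * indicator (A z) x \<partial>M)"
    using Aev by (simp add: Int_absorb2 sets.sets_into_space)
  also have "\<dots> = (\<integral>x. (\<Sum>z \<in> Zs. g z * indicator (A z) x) \<partial>M)"
    by (rule Bochner_Integration.integral_sum[where I=Zs and f="\<lambda>z x. g z * indicator (A z) x", symmetric]) (auto intro!: integrable_mult_right int_ind[OF P Aev])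
  also have "\<dots> = (\<integral>x. g ((Z x)(l := False)) * indicator E x \<partial>M)"
  proof (rule Bochner_Integration.integral_cong[OF refl])
    fix x assume x: "x \<in> space M"
    have W: "(Z x)(l := False) \<in> Zs" using ZL x by (auto simp: Zs_def Zsp_def)
    have "(\<Sum>z \<in> Zs. g z * indicator (A z) x) = (\<Sum>z \<in> Zs. if (Z x)(l := False) = z then (if Z x l = b then g z else 0) else 0)"
      by (intro sum.cong refl) (auto simp: A_def indicator_def x)
    also have "\<dots> = (if Z x l = b then g ((Z x)(l := False)) else 0)"
      using fin W by (simp add: sum.delta)
    finally show "(\<Sum>z \<in> Zs. g z * indicator (A z) x) = g ((Z x)(l := False)) * indicator E x"
      by (simp add: E_def evZ_def indicator_def x)
  qed
  finally show ?thesis by (simp add: cexp_def E_def Zs_def)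
qed

definition Rt :: "'a measure \<Rightarrow> ('a \<Rightarrow> nat \<Rightarrow> bool) \<Rightarrow> ((nat \<Rightarrow> bool) \<Rightarrow> bool) \<Rightarrow> nat \<Rightarrow> bool \<Rightarrow> real" where
  "Rt M Z t l b = measure M {x \<in> space M. t (Z x) \<and> Z x l = b} / measure M (evZ M Z l b)"

lemma cexp_decomp:
  fixes h :: "((nat \<Rightarrow> bool) \<Rightarrow> bool) \<Rightarrow> 'a \<Rightarrow> real"
  assumes P: "prob_space M" and Zm: "Z \<in> measurable M (count_space UNIV)"
    and T: "finite T"
    and int0: "integrable M h0" and inth: "\<And>t. t \<in> T \<Longrightarrow> integrable M (h t)"
    and ind0: "\<And>Q. (\<integral>x. h0 x * indicator {x \<in> space M. Q (Z x)} x \<partial>M) = (\<integral>x. h0 x \<partial>M) * measure M {x \<in> space M. Q (Z x)}"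
    and indh: "\<And>t Q. t \<in> T \<Longrightarrow> (\<integral>x. h t x * indicator {x \<in> space M. Q (Z x)} x \<partial>M) = (\<integral>x. h t x \<partial>M) * measure M {x \<in> space M. Q (Z x)}"
    and F: "\<And>x. x \<in> space M \<Longrightarrow> F x = h0 x + (\<Sum>t\<in>T. h t x * (if t (Z x) then 1 else 0))"
    and pos: "measure M (evZ M Z l b) > 0"
  shows "cexp M F (evZ M Z l b) = (\<integral>x. h0 x \<partial>M) + (\<Sum>t\<in>T. (\<integral>x. h t x \<partial>M) * Rt M Z t l b)"
proof -
  interpret prob_space M by fact
  define E where "E = evZ M Z l b"
  define Ft where "Ft t = {x \<in> space M. t (Z x) \<and> Z x l = b}" for t :: "(nat \<Rightarrow> bool) \<Rightarrow> bool"
  have Eeq: "E = {x \<in> space M. Z x l = b}" by (simp add: E_def evZ_def)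
  have Ev: "E \<in> sets M" unfolding Eeq by (rule Zev[OF Zm])
  have Ftv: "Ft t \<in> sets M" for t unfolding Ft_def by (rule Zev[OF Zm])
  have "(\<integral>x. F x * indicator E x \<partial>M) = (\<integral>x. h0 x * indicator E x + (\<Sum>t\<in>T. h t x * indicator (Ft t) x) \<partial>M)"
  proof (rule Bochner_Integration.integral_cong[OF refl])
    fix x assume x: "x \<in> space M"
    show "F x * indicator E x = h0 x * indicator E x + (\<Sum>t\<in>T. h t x * indicator (Ft t) x)"
      unfolding F[OF x] distrib_right sum_distrib_right
      by (intro arg_cong2[where f="(+)"] refl sum.cong) (auto simp: Ft_def Eeq indicator_def x)
  qed
  also have "\<dots> = (\<integral>x. h0 x * indicator E x \<partial>M) + (\<Sum>t\<in>T. \<integral>x. h t x * indicator (Ft t) x \<partial>M)"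
  proof -
    have s: "(\<integral>x. (\<Sum>t\<in>T. h t x * indicator (Ft t) x) \<partial>M) = (\<Sum>t\<in>T. \<integral>x. h t x * indicator (Ft t) x \<partial>M)"
      by (rule Bochner_Integration.integral_sum[where I=T and f="\<lambda>t x. h t x * indicator (Ft t) x"])
         (auto intro!: integrable_real_mult_indicator Ftv inth)
    show ?thesis
      by (subst Bochner_Integration.integral_add)
         (auto intro!: integrable_real_mult_indicator Ev Ftv int0 inth Bochner_Integration.integrable_sum simp: s)
  qed
  also have "\<dots> = (\<integral>x. h0 x \<partial>M) * measure M E + (\<Sum>t\<in>T. (\<integral>x. h t x \<partial>M) * measure M (Ft t))"
    unfolding Eeq Ft_def using ind0[of "\<lambda>z. z l = b"] indh[of _ "\<lambda>z. _ z \<and> z l = b"]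
    by (simp cong: sum.cong)
  finally show ?thesis
    using pos by (simp add: cexp_def E_def[symmetric] Rt_def Ft_def[symmetric] add_divide_distrib sum_divide_distrib)
qed

lemma Rt_phi:
  assumes P: "prob_space M" and Zm: "Z \<in> measurable M (count_space UNIV)"
    and ZL: "\<forall>x \<in> space M. Z x \<in> Zsp L"
  shows "phi M Z L t l = Rt M Z t l True - Rt M Z t l False"
proof -
  interpret prob_space M by fact
  have R: "Rt M Z t l b = (\<Sum>z \<in> {z \<in> Zsp L. \<not> z l}. (if t (z(l := b)) then 1 else 0) * qZ M Z l b z)" for b
  proof -
    have "(\<Sum>z \<in> {z \<in> Zsp L. \<not> z l}. (if t (z(l := b)) then 1 else 0) * qZ M Z l b z)
       = cexp M (\<lambda>x. (if t ((Z x)(l := False, l := b)) then 1 else 0)) (evZ M Z l b)"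
      by (rule qsum[OF P Zm ZL])
    also have "\<dots> = (\<integral>x. indicator {x \<in> space M. t (Z x) \<and> Z x l = b} x \<partial>M) / measure M (evZ M Z l b)"
      unfolding cexp_def
    proof (intro arg_cong2[where f="(/)"] refl Bochner_Integration.integral_cong)
      fix x assume x: "x \<in> space M"
      show "(if t ((Z x)(l := False, l := b)) then 1 else 0) * indicator (evZ M Z l b) x
          = ( indicator {x \<in> space M. t (Z x) \<and> Z x l = b} x :: real)"
      proof (cases "Z x l = b")
        case True
        then have "(Z x)(l := False, l := b) = Z x" by auto
        then show ?thesis using True x by (simp add: indicator_def evZ_def)
      qed (auto simp: indicator_def evZ_def)
    qed
    also have "\<dots> = Rt M Z t l b"
      using Zev[OF Zm, of "\<lambda>z. t z \<and> z l = b"] by (simp add: Rt_def Int_absorb2 sets.sets_into_space)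
    finally show ?thesis by simp
  qed
  have "phi M Z L t l = (\<Sum>z \<in> {z \<in> Zsp L. \<not> z l}. (if t (z(l := True)) then 1 else 0) * qZ M Z l True z)
      - (\<Sum>z \<in> {z \<in> Zsp L. \<not> z l}. (if t (z(l := False)) then 1 else 0) * qZ M Z l False z)"
    unfolding phi_def sum_subtractf[symmetric]
    by (intro sum.cong refl) (auto simp: fun_upd_idem)
  then show ?thesis by (simp add: R)
qed

lemma sum_ind:
  assumes "finite T" "a \<in> T"
  shows "(\<Sum>t\<in>T. f t * indicator {t} a) = (f a :: real)"
proof -
  have "(\<Sum>t\<in>T. f t * indicator {t} a) = (\<Sum>t\<in>T. if a = t then f t else 0)"
    by (intro sum.cong) (auto simp: indicator_def)
  also have "\<dots> = f a" using assms by (simp add: sum.delta)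
  finally show ?thesis .
qed

lemma phi_nonneg:
  assumes P: "prob_space M" and Zm: "Z \<in> measurable M (count_space UNIV)"
    and ZL: "\<forall>x \<in> space M. Z x \<in> Zsp L"
    and l: "l < L" and t: "t \<in> Types L" and A4: "A4 M Z L"
    and posT: "measure M (evZ M Z l True) > 0"
  shows "phi M Z L t l \<ge> 0"
proof -
  interpret prob_space M by fact
  define g1 where "g1 z = (if t (z(l := True)) then 1 else (0::real))" for z
  define g0 where "g0 z = (if t z then 1 else (0::real))" for z
  have tm: "mono_on (Zsp L) t" using t by (simp add: Types_def)
  have "phi M Z L t l = (\<Sum>z \<in> {z \<in> Zsp L. \<not> z l}. g1 z * qZ M Z l True z)
      - (\<Sum>z \<in> {z \<in> Zsp L. \<not> z l}. g0 z * qZ M Z l False z)"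
    unfolding phi_def sum_subtractf[symmetric] g1_def g0_def by simp
  also have "\<dots> = cexp M (\<lambda>x. g1 ((Z x)(l := False))) (evZ M Z l True)
      - cexp M (\<lambda>x. g0 ((Z x)(l := False))) (evZ M Z l False)"
    by (simp add: qsum[OF P Zm ZL])
  finally have eq: "phi M Z L t l = \<dots>" .
  have ET: "evZ M Z l True \<in> sets M" unfolding evZ_def by (rule Zev[OF Zm])
  have intg: "integrable M (\<lambda>x. g ((Z x)(l := False)) * indicator (evZ M Z l True) x)"
    if "\<And>z. g z = 0 \<or> g z = 1" for g :: "(nat \<Rightarrow> bool) \<Rightarrow> real"
  proof (intro integrable_real_mult_indicator ET)
    show "integrable M (\<lambda>x. g ((Z x)(l := False)))"
    proof (rule integrable_const_bound[where B=1])
      show "AE x in M. norm (g ((Z x)(l := False))) \<le> 1"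
      proof (rule AE_I2)
        fix x
        have "g ((Z x)(l := False)) = 0 \<or> g ((Z x)(l := False)) = 1" by (rule that)
        then show "norm (g ((Z x)(l := False))) \<le> 1" by auto
      qed
      show "(\<lambda>x. g ((Z x)(l := False))) \<in> borel_measurable M"
        using Zfun_meas[OF Zm, of "\<lambda>z. g (z(l := False))"] by simp
    qed
  qed
  have "cexp M (\<lambda>x. g0 ((Z x)(l := False))) (evZ M Z l True)
      \<le> cexp M (\<lambda>x. g1 ((Z x)(l := False))) (evZ M Z l True)"
    unfolding cexp_def
  proof (intro divide_right_mono integral_mono)
    show "integrable M (\<lambda>x. g0 ((Z x)(l := False)) * indicator (evZ M Z l True) x)"
      by (rule intg) (simp add: g0_def)
    show "integrable M (\<lambda>x. g1 ((Z x)(l := False)) * indicator (evZ M Z l True) x)"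
      by (rule intg) (simp add: g1_def)
    show "0 \<le> measure M (evZ M Z l True)" by simp
    fix x assume x: "x \<in> space M"
    have W: "(Z x)(l := False) \<in> Zsp L" "(Z x)(l := False, l := True) \<in> Zsp L"
      using ZL x l by (auto simp: Zsp_def)
    have "(Z x)(l := False) \<le> (Z x)(l := False, l := True)" by (auto simp: le_fun_def)
    then have "t ((Z x)(l := False)) \<le> t ((Z x)(l := False, l := True))"
      by (rule mono_onD[OF tm W(1) W(2)])
    then show "g0 ((Z x)(l := False)) * indicator (evZ M Z l True) x
        \<le> g1 ((Z x)(l := False)) * indicator (evZ M Z l True) x"
      by (auto simp: g0_def g1_def indicator_def)
  qed
  moreover have "cexp M (\<lambda>x. g0 ((Z x)(l := False))) (evZ M Z l False)
      \<le> cexp M (\<lambda>x. g0 ((Z x)(l := False))) (evZ M Z l True)"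
  proof -
    have "mono_on (Zsp L) g0"
    proof (rule mono_onI)
      fix r s assume "r \<in> Zsp L" "s \<in> Zsp L" "r \<le> s"
      then have "t r \<le> t s" by (rule mono_onD[OF tm])
      then show "g0 r \<le> g0 s" by (auto simp: g0_def)
    qed
    then show ?thesis using A4 l unfolding A4_def by simp
  qed
  ultimately show ?thesis unfolding eq by simp
qed

theorem proposition9:
  fixes M :: "'a measure" and L :: nat
    and Y0 Y1 :: "'a \<Rightarrow> real"
    and D :: "'a \<Rightarrow> (nat \<Rightarrow> bool) \<Rightarrow> bool"
    and Z :: "'a \<Rightarrow> nat \<Rightarrow> bool"
    and w :: "nat \<Rightarrow> real"
  assumes "prob_space M"
    and "2 \<le> L"
    and "Z \<in> measurable M (count_space UNIV)"
    and "\<forall>x \<in> space M. Z x \<in> Zsp L"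
    and "D \<in> measurable M (count_space UNIV)"
    and "\<forall>x \<in> space M. D x \<in> canon_types L"
    and "integrable M Y0" and "integrable M Y1"
    and A1: "prob_space.indep_set M
               {(\<lambda>x. (Y0 x, Y1 x, D x)) -` A \<inter> space M | A.
                  A \<in> sets (borel \<Otimes>\<^sub>M borel \<Otimes>\<^sub>M count_space UNIV)}
               {Z -` B \<inter> space M | B. B \<in> sets (count_space UNIV)}"
    and A2: "\<forall>x \<in> space M. mono_on (Zsp L) (D x)"
    and A3: "\<forall>l<L. pZ M Z l > 0 \<and> piZ M D Z l > 0" "posdef L (SigmaZ M Z)"
    and A4: "A4 M Z L"
    and "wsimplex L w"
  shows "beta_star M Y0 Y1 D Z L w = (\<Sum>t \<in> Types L. psi M D Z L w t * LATE M Y0 Y1 D t)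
         \<and> (\<forall>t \<in> Types L. psi M D Z L w t \<ge> 0)
         \<and> (\<Sum>t \<in> Types L. psi M D Z L w t) = 1"
proof -
  note P = assms(1) and Zm = assms(3) and ZL = assms(4) and Dm = assms(5)
  interpret prob_space M by fact
  define T where "T = Types L"
  have Tfin: "finite T" unfolding T_def by (rule Types_finite)
  have DT: "D x \<in> T" if "x \<in> space M" for x
    using assms(6) A2 that by (auto simp: T_def Types_def)
  define V where "V = (\<lambda>x. (Y0 x, Y1 x, D x))"
  have Y0m: "Y0 \<in> borel_measurable M" using assms(7) by simp
  have Y1m: "Y1 \<in> borel_measurable M" using assms(8) by simp
  have Vm: "V \<in> measurable M (borel \<Otimes>\<^sub>M borel \<Otimes>\<^sub>M count_space UNIV)"
    unfolding V_def using Y0m Y1m Dm by measurable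
  have indV: "(\<integral>x. H (V x) * indicator {x \<in> space M. Q (Z x)} x \<partial>M)
        = (\<integral>x. H (V x) \<partial>M) * measure M {x \<in> space M. Q (Z x)}"
    if "H \<in> borel_measurable (borel \<Otimes>\<^sub>M borel \<Otimes>\<^sub>M count_space UNIV)"
       "integrable M (\<lambda>x. H (V x))" for H Q
    using indep_int[OF P A1[folded V_def] Vm Zm that, of "Collect Q"] by simp
  have Dev: "{x \<in> space M. D x = t} \<in> sets M" for t by (rule Zev[OF Dm])
  define hY where "hY t x = (Y1 x - Y0 x) * indicator {t} (D x)" for t x
  define hD where "hD t x = (indicator {t} (D x) :: real)" for t x
  have HD: "(\<lambda>p. indicator {t} (snd (snd p)) :: real)
      \<in> borel_measurable (borel \<Otimes>\<^sub>M borel \<Otimes>\<^sub>M count_space UNIV)" for t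
    by (rule measurable_compose[OF measurable_compose[OF measurable_snd measurable_snd] borel_measurable_count_space])
  have HY: "(\<lambda>p. (fst (snd p) - fst p) * indicator {t} (snd (snd p)) :: real)
      \<in> borel_measurable (borel \<Otimes>\<^sub>M borel \<Otimes>\<^sub>M count_space UNIV)" for t
    by (rule borel_measurable_times[OF _ HD]) measurable
  have inthY: "integrable M (hY t)" for t
  proof -
    have "integrable M (\<lambda>x. (Y1 x - Y0 x) * indicator {x \<in> space M. D x = t} x)"
      using assms(7,8) Dev by (intro integrable_real_mult_indicator) auto
    moreover have "integrable M (hY t) = integrable M (\<lambda>x. (Y1 x - Y0 x) * indicator {x \<in> space M. D x = t} x)"
      by (rule Bochner_Integration.integrable_cong) (auto simp: hY_def indicator_def)
    ultimately show ?thesis by simp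
  qed
  have inthD: "integrable M (hD t)" for t
  proof -
    have "integrable M (indicator {x \<in> space M. D x = t} :: _ \<Rightarrow> real)"
      by (rule int_ind[OF P Dev])
    moreover have "integrable M (hD t) = integrable M (indicator {x \<in> space M. D x = t} :: _ \<Rightarrow> real)"
      by (rule Bochner_Integration.integrable_cong) (auto simp: hD_def indicator_def)
    ultimately show ?thesis by simp
  qed
  have ihY: "(\<integral>x. hY t x * indicator {x \<in> space M. Q (Z x)} x \<partial>M) = (\<integral>x. hY t x \<partial>M) * measure M {x \<in> space M. Q (Z x)}" for t Q
    using indV[OF HY, of t Q] inthY[of t, unfolded hY_def] by (simp add: hY_def V_def)
  have ihD: "(\<integral>x. hD t x * indicator {x \<in> space M. Q (Z x)} x \<partial>M) = (\<integral>x. hD t x \<partial>M) * measure M {x \<in> space M. Q (Z x)}" for t Q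
    using indV[OF HD, of t Q] inthD[of t, unfolded hD_def] by (simp add: hD_def V_def)
  have ih0: "(\<integral>x. Y0 x * indicator {x \<in> space M. Q (Z x)} x \<partial>M) = (\<integral>x. Y0 x \<partial>M) * measure M {x \<in> space M. Q (Z x)}" for Q
    using indV[of fst Q] assms(7) by (simp add: V_def)
  have ihz: "(\<integral>x. (0::real) * indicator {x \<in> space M. Q (Z x)} x \<partial>M) = (\<integral>x. 0 \<partial>M) * measure M {x \<in> space M. Q (Z x)}" for Q
    by simp
  have FY: "Yobs Y0 Y1 D Z x = Y0 x + (\<Sum>t\<in>T. hY t x * (if t (Z x) then 1 else 0))" if x: "x \<in> space M" for x
  proof -
    have "(\<Sum>t\<in>T. hY t x * (if t (Z x) then 1 else 0)) = (\<Sum>t\<in>T. ((Y1 x - Y0 x) * (if t (Z x) then 1 else 0)) * indicator {t} (D x))"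
      by (intro sum.cong) (auto simp: hY_def)
    also have "\<dots> = (Y1 x - Y0 x) * (if D x (Z x) then 1 else 0)"
      by (rule sum_ind[OF Tfin DT[OF x]])
    finally show ?thesis by (simp add: Yobs_def)
  qed
  have FD: "Dobs D Z x = 0 + (\<Sum>t\<in>T. hD t x * (if t (Z x) then 1 else 0))" if x: "x \<in> space M" for x
  proof -
    have "(\<Sum>t\<in>T. hD t x * (if t (Z x) then 1 else 0)) = (\<Sum>t\<in>T. (if t (Z x) then 1 else 0) * indicator {t} (D x))"
      by (intro sum.cong) (auto simp: hD_def)
    also have "\<dots> = (if D x (Z x) then 1 else 0)"
      by (rule sum_ind[OF Tfin DT[OF x]])
    finally show ?thesis by (simp add: Dobs_def)
  qed
  have theta: "(\<integral>x. hD t x \<partial>M) = theta M D t" for t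
  proof -
    have "(\<integral>x. hD t x \<partial>M) = (\<integral>x. indicator {x \<in> space M. D x = t} x \<partial>M)"
      by (rule Bochner_Integration.integral_cong) (auto simp: hD_def indicator_def)
    also have "\<dots> = theta M D t" using Dev[of t] by (simp add: theta_def Int_absorb2 sets.sets_into_space)
    finally show ?thesis .
  qed
  have late: "(\<integral>x. hY t x \<partial>M) = theta M D t * LATE M Y0 Y1 D t" for t
  proof -
    have e: "(\<integral>x. hY t x \<partial>M) = (\<integral>x. (Y1 x - Y0 x) * indicator {x \<in> space M. D x = t} x \<partial>M)"
      by (rule Bochner_Integration.integral_cong) (auto simp: hY_def indicator_def)
    show ?thesis
    proof (cases "theta M D t = 0")
      case False
      then show ?thesis by (simp add: e LATE_def cexp_def theta_def)
    next
      case True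
      have "{x \<in> space M. D x = t} \<in> null_sets M"
        using True Dev[of t] by (simp add: theta_def null_sets_def emeasure_eq_measure)
      then have "AE x in M. x \<notin> {x \<in> space M. D x = t}" by (rule AE_not_in)
      then have "AE x in M. (Y1 x - Y0 x) * indicator {x \<in> space M. D x = t} x = 0"
        by eventually_elim auto
      then have "(\<integral>x. (Y1 x - Y0 x) * indicator {x \<in> space M. D x = t} x \<partial>M) = 0"
        by (rule integral_eq_zero_AE)
      then show ?thesis using True e by simp
    qed
  qed
  have posF: "measure M (evZ M Z l False) > 0" if l: "l < L" for l
  proof -
    define c where "c m = (if m = l then 1 else (0::real))" for m
    have "(\<Sum>m<L. \<Sum>n<L. c m * c n * SigmaZ M Z m n) > 0"
      using A3(2) l unfolding posdef_def by (auto simp: c_def intro!: exI[of _ l])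
    also have "(\<Sum>m<L. \<Sum>n<L. c m * c n * SigmaZ M Z m n) = SigmaZ M Z l l"
    proof -
      have inner: "(\<Sum>n<L. c m * c n * SigmaZ M Z m n) = c m * SigmaZ M Z m l" for m
      proof -
        have "(\<Sum>n<L. c m * c n * SigmaZ M Z m n) = (\<Sum>n<L. if n = l then c m * SigmaZ M Z m n else 0)"
          by (intro sum.cong) (auto simp: c_def)
        also have "\<dots> = c m * SigmaZ M Z m l" using l by (simp add: sum.delta)
        finally show ?thesis .
      qed
      have "(\<Sum>m<L. c m * SigmaZ M Z m l) = (\<Sum>m<L. if m = l then SigmaZ M Z m l else 0)"
        by (intro sum.cong) (auto simp: c_def)
      also have "\<dots> = SigmaZ M Z l l" using l by (simp add: sum.delta)
      finally show ?thesis by (simp add: inner)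
    qed
    finally have "SigmaZ M Z l l > 0" .
    then have "pZ M Z l - pZ M Z l * pZ M Z l > 0"
      by (simp add: SigmaZ_def pZ_def evZ_def)
    then have "pZ M Z l < 1"
      using A3(1) l by (smt (verit) mult_le_cancel_left1)
    moreover have "evZ M Z l False = space M - evZ M Z l True" by (auto simp: evZ_def)
    moreover have "evZ M Z l True \<in> sets M" unfolding evZ_def by (rule Zev[OF Zm])
    ultimately show ?thesis by (simp add: prob_compl pZ_def)
  qed
  have posT: "measure M (evZ M Z l True) > 0" if "l < L" for l
    using A3(1) that by (simp add: pZ_def)
  have piT: "piZ M D Z l = (\<Sum>t\<in>T. theta M D t * phi M Z L t l)" if l: "l < L" for l
  proof -
    have "\<And>b. measure M (evZ M Z l b) > 0" using posT[OF l] posF[OF l] by (case_tac b) auto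
    then have "piZ M D Z l = (0 + (\<Sum>t\<in>T. theta M D t * Rt M Z t l True)) - (0 + (\<Sum>t\<in>T. theta M D t * Rt M Z t l False))"
      unfolding piZ_def
      by (simp only: cexp_decomp[OF P Zm Tfin _ inthD ihz ihD FD, simplified theta] integrable_zero)
    then show ?thesis
      by (simp add: Rt_phi[OF P Zm ZL] right_diff_distrib sum_subtractf)
  qed
  have rhoT: "rhoZ M Y0 Y1 D Z l = (\<Sum>t\<in>T. theta M D t * LATE M Y0 Y1 D t * phi M Z L t l)" if l: "l < L" for l
  proof -
    have "\<And>b. measure M (evZ M Z l b) > 0" using posT[OF l] posF[OF l] by (case_tac b) auto
    then have "rhoZ M Y0 Y1 D Z l = ((\<integral>x. Y0 x \<partial>M) + (\<Sum>t\<in>T. theta M D t * LATE M Y0 Y1 D t * Rt M Z t l True))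
         - ((\<integral>x. Y0 x \<partial>M) + (\<Sum>t\<in>T. theta M D t * LATE M Y0 Y1 D t * Rt M Z t l False))"
      unfolding rhoZ_def
      by (simp only: cexp_decomp[OF P Zm Tfin assms(7) inthY ih0 ihY FY, simplified late])
    then show ?thesis
      by (simp add: Rt_phi[OF P Zm ZL] right_diff_distrib sum_subtractf mult.assoc)
  qed
  have Wald: "Wald M Y0 Y1 D Z l = (\<Sum>t\<in>T. alpha M D Z L t l * LATE M Y0 Y1 D t)" if l: "l < L" for l
    unfolding Wald_def alpha_def rhoT[OF l] sum_divide_distrib
    by (intro sum.cong refl) (simp add: field_simps)
  have "beta_star M Y0 Y1 D Z L w = (\<Sum>l<L. \<Sum>t\<in>T. w l * alpha M D Z L t l * LATE M Y0 Y1 D t)"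
    unfolding beta_star_def by (intro sum.cong refl) (simp add: Wald sum_distrib_left mult.assoc)
  also have "\<dots> = (\<Sum>t\<in>T. psi M D Z L w t * LATE M Y0 Y1 D t)"
    unfolding psi_def sum_distrib_right by (rule sum.swap)
  finally have c1: "beta_star M Y0 Y1 D Z L w = (\<Sum>t\<in>T. psi M D Z L w t * LATE M Y0 Y1 D t)" .
  have c2: "psi M D Z L w t \<ge> 0" if t: "t \<in> T" for t
    unfolding psi_def alpha_def
  proof (intro sum_nonneg mult_nonneg_nonneg divide_nonneg_pos)
    fix l assume l: "l \<in> {..<L}"
    show "0 \<le> w l" using assms(14) l by (simp add: wsimplex_def)
    show "0 \<le> theta M D t" by (simp add: theta_def)
    show "0 \<le> phi M Z L t l" using phi_nonneg[OF P Zm ZL _ t[unfolded T_def] A4 posT] l by simp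
    show "0 < piZ M D Z l" using A3(1) l by simp
  qed
  have "(\<Sum>t\<in>T. psi M D Z L w t) = (\<Sum>l<L. w l * ((\<Sum>t\<in>T. theta M D t * phi M Z L t l) / piZ M D Z l))"
    unfolding psi_def alpha_def
    by (subst sum.swap) (simp add: sum_distrib_left sum_divide_distrib)
  also have "\<dots> = (\<Sum>l<L. w l)"
    using A3(1) by (intro sum.cong refl) (auto simp: piT[symmetric])
  also have "\<dots> = 1" using assms(14) by (simp add: wsimplex_def)
  finally show ?thesis using c1 c2 by (simp add: T_def)
qed

end
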